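(* Let $L$ be a multisorted algebra in the positive existential signature satisfying axioms (1), (2), (7), (9). Let $F$ be a prime filter on sort $n$ of $L$ and let $r$ be an element of sort $n+1$ with $\exists(r)\in F$. Then there is a prime filter $G$ on sort $n+1$ such that $r\in G$ and for all $u$ of sort $n$, $c(u)\in G$ if and only if $u\in F$, where $c\colon n\to n+1$ is the associated cylindrification.
   Context: The Boolean prime ideal theorem is assumed. Signature. There is a sort $n$ for each $n\ge0$. For every function $\alpha\colon\{1,\dots,n\}\to\{1,\dots,k\}$ there is a unary function symbol ("substitution") $\alpha\colon n\to k$ (argument of sort $n$, value of sort $k$). Each sort has $0,1,\vee,\wedge$; for each $n$ there is $\exists\colon n+1\to n$ (positive existential signature). The associated cylindrification of $\exists\colon n+1\to n$ is the substitution $c\colon n\to n+1$ given by $c(i)=i$. Axioms: (1) each sort is a bounded distributive lattice under $0,1,\vee,\wedge$; (2) substitutions preserve $0,1,\vee,\wedge$; (7) $\exists(0)=0$ and $\exists(r\vee s)=\exists(r)\vee\exists(s)$; (9) $\exists(r\wedge c(s))=\exists(r)\wedge s$ for all $r$ of sort $n+1$, $s$ of sort $n$. A prime filter is a proper, nonempty, upward-closed, $\wedge$-closed subset of a sort with $x\vee y\in F\Rightarrow x\in F$ or $y\in F$. *)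

theory Defs
  imports "HOL-Library.FuncSet"
begin

(* The substitution symbol for alpha : {1..n} -> {1..k} is sub n k alpha,
  where alpha ranges over the extensional functions {1..n} ->E {1..k}.
  ex n is the existential quantifier from sort n+1 to sort n. *)

record 'a pe_alg =
  car  :: "nat \<Rightarrow> 'a set"
  bot  :: "nat \<Rightarrow> 'a"
  top  :: "nat \<Rightarrow> 'a"
  join :: "nat \<Rightarrow> 'a \<Rightarrow> 'a \<Rightarrow> 'a"
  meet :: "nat \<Rightarrow> 'a \<Rightarrow> 'a \<Rightarrow> 'a"
  sub  :: "nat \<Rightarrow> nat \<Rightarrow> (nat \<Rightarrow> nat) \<Rightarrow> 'a \<Rightarrow> 'a"
  ex   :: "nat \<Rightarrow> 'a \<Rightarrow> 'a"

(* Axiom (1): each sort is a bounded distributive lattice. *)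
definition bdl_sort :: "'a pe_alg \<Rightarrow> nat \<Rightarrow> bool" where
  "bdl_sort L n \<longleftrightarrow>
     bot L n \<in> car L n \<and> top L n \<in> car L n \<and>
     (\<forall>x\<in>car L n. \<forall>y\<in>car L n. join L n x y \<in> car L n \<and> meet L n x y \<in> car L n) \<and>
     (\<forall>x\<in>car L n. \<forall>y\<in>car L n. join L n x y = join L n y x \<and> meet L n x y = meet L n y x) \<and>
     (\<forall>x\<in>car L n. \<forall>y\<in>car L n. \<forall>z\<in>car L n.
        join L n (join L n x y) z = join L n x (join L n y z) \<and>
        meet L n (meet L n x y) z = meet L n x (meet L n y z)) \<and>
     (\<forall>x\<in>car L n. \<forall>y\<in>car L n.
        join L n x (meet L n x y) = x \<and> meet L n x (join L n x y) = x) \<and>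
     (\<forall>x\<in>car L n. \<forall>y\<in>car L n. \<forall>z\<in>car L n.
        meet L n x (join L n y z) = join L n (meet L n x y) (meet L n x z)) \<and>
     (\<forall>x\<in>car L n. join L n x (bot L n) = x \<and> meet L n x (top L n) = x)"

(* Axiom (2): substitutions are well-sorted and preserve 0, 1, join, meet. *)
definition subst_ax :: "'a pe_alg \<Rightarrow> bool" where
  "subst_ax L \<longleftrightarrow>
     (\<forall>n k. \<forall>\<alpha>\<in>{1..n} \<rightarrow>\<^sub>E {1..k}.
        (\<forall>x\<in>car L n. sub L n k \<alpha> x \<in> car L k) \<and>
        sub L n k \<alpha> (bot L n) = bot L k \<and>
        sub L n k \<alpha> (top L n) = top L k \<and>
        (\<forall>x\<in>car L n. \<forall>y\<in>car L n.
           sub L n k \<alpha> (join L n x y) = join L k (sub L n k \<alpha> x) (sub L n k \<alpha> y) \<and>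
           sub L n k \<alpha> (meet L n x y) = meet L k (sub L n k \<alpha> x) (sub L n k \<alpha> y)))"

definition cyl :: "'a pe_alg \<Rightarrow> nat \<Rightarrow> 'a \<Rightarrow> 'a" where
  "cyl L n = sub L n (Suc n) (restrict (\<lambda>i. i) {1..n})"

(* Axioms (7) and (9) for the existential quantifier (plus well-sortedness). *)
definition ex_ax :: "'a pe_alg \<Rightarrow> bool" where
  "ex_ax L \<longleftrightarrow>
     (\<forall>n. (\<forall>r\<in>car L (Suc n). ex L n r \<in> car L n) \<and>
          ex L n (bot L (Suc n)) = bot L n \<and>
          (\<forall>r\<in>car L (Suc n). \<forall>s\<in>car L (Suc n).
             ex L n (join L (Suc n) r s) = join L n (ex L n r) (ex L n s)) \<and>
          (\<forall>r\<in>car L (Suc n). \<forall>s\<in>car L n.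
             ex L n (meet L (Suc n) r (cyl L n s)) = meet L n (ex L n r) s))"

definition pe_algebra :: "'a pe_alg \<Rightarrow> bool" where
  "pe_algebra L \<longleftrightarrow> (\<forall>n. bdl_sort L n) \<and> subst_ax L \<and> ex_ax L"

definition leq :: "'a pe_alg \<Rightarrow> nat \<Rightarrow> 'a \<Rightarrow> 'a \<Rightarrow> bool" where
  "leq L n x y \<longleftrightarrow> meet L n x y = x"

definition prime_filter :: "'a pe_alg \<Rightarrow> nat \<Rightarrow> 'a set \<Rightarrow> bool" where
  "prime_filter L n F \<longleftrightarrow>
     F \<subseteq> car L n \<and> F \<noteq> car L n \<and> F \<noteq> {} \<and>
     (\<forall>x\<in>F. \<forall>y\<in>car L n. leq L n x y \<longrightarrow> y \<in> F) \<and>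
     (\<forall>x\<in>F. \<forall>y\<in>F. meet L n x y \<in> F) \<and>
     (\<forall>x\<in>car L n. \<forall>y\<in>car L n. join L n x y \<in> F \<longrightarrow> x \<in> F \<or> y \<in> F)"

end

theory Submission
  imports Defs
begin

locale dlat =
  fixes C :: "'a set" and jn mt :: "'a \<Rightarrow> 'a \<Rightarrow> 'a" and bt tp :: 'a
  assumes bt: "bt \<in> C" and tp: "tp \<in> C"
  and jn_closed: "x\<in>C \<Longrightarrow> y\<in>C \<Longrightarrow> jn x y \<in> C"
  and mt_closed: "x\<in>C \<Longrightarrow> y\<in>C \<Longrightarrow> mt x y \<in> C"
  and jn_comm: "x\<in>C \<Longrightarrow> y\<in>C \<Longrightarrow> jn x y = jn y x"
  and mt_comm: "x\<in>C \<Longrightarrow> y\<in>C \<Longrightarrow> mt x y = mt y x"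
  and jn_assoc: "x\<in>C \<Longrightarrow> y\<in>C \<Longrightarrow> z\<in>C \<Longrightarrow> jn (jn x y) z = jn x (jn y z)"
  and mt_assoc: "x\<in>C \<Longrightarrow> y\<in>C \<Longrightarrow> z\<in>C \<Longrightarrow> mt (mt x y) z = mt x (mt y z)"
  and absorb1: "x\<in>C \<Longrightarrow> y\<in>C \<Longrightarrow> jn x (mt x y) = x"
  and absorb2: "x\<in>C \<Longrightarrow> y\<in>C \<Longrightarrow> mt x (jn x y) = x"
  and distr: "x\<in>C \<Longrightarrow> y\<in>C \<Longrightarrow> z\<in>C \<Longrightarrow> mt x (jn y z) = jn (mt x y) (mt x z)"
  and jn_bot: "x\<in>C \<Longrightarrow> jn x bt = x"
  and mt_top: "x\<in>C \<Longrightarrow> mt x tp = x"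
begin

definition le where "le x y \<longleftrightarrow> mt x y = x"

lemma mt_idem: "x\<in>C \<Longrightarrow> mt x x = x"
proof -
  assume a: "x\<in>C"
  have "mt x (jn x (mt x x)) = x" using absorb2 a mt_closed by blast
  then show ?thesis using absorb1 a by simp
qed

lemma le_refl: "x\<in>C \<Longrightarrow> le x x" by (simp add: le_def mt_idem)

lemma le_trans: "x\<in>C \<Longrightarrow> y\<in>C \<Longrightarrow> z\<in>C \<Longrightarrow> le x y \<Longrightarrow> le y z \<Longrightarrow> le x z"
  unfolding le_def
proof -
  assume a: "x\<in>C" "y\<in>C" "z\<in>C" "mt x y = x" "mt y z = y"
  have "mt x z = mt (mt x y) z" using a by simp
  also have "\<dots> = mt x (mt y z)" using a mt_assoc by blast
  also have "\<dots> = x" using a by simp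
  finally show "mt x z = x" .
qed

lemma mt_lower1: "x\<in>C \<Longrightarrow> y\<in>C \<Longrightarrow> le (mt x y) x"
proof -
  assume a: "x\<in>C" "y\<in>C"
  have "mt (mt x y) x = mt x (mt y x)" using a mt_assoc by blast
  also have "\<dots> = mt x (mt x y)" using a mt_comm by simp
  also have "\<dots> = mt (mt x x) y" using a mt_assoc by simp
  also have "\<dots> = mt x y" using a mt_idem by simp
  finally show ?thesis unfolding le_def .
qed

lemma mt_lower2: "x\<in>C \<Longrightarrow> y\<in>C \<Longrightarrow> le (mt x y) y"
proof -
  assume a: "x\<in>C" "y\<in>C"
  have "mt (mt x y) y = mt x (mt y y)" using a mt_assoc by blast
  also have "\<dots> = mt x y" using a mt_idem by simp
  finally show ?thesis unfolding le_def .
qed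

lemma mt_greatest: "x\<in>C \<Longrightarrow> y\<in>C \<Longrightarrow> z\<in>C \<Longrightarrow> le z x \<Longrightarrow> le z y \<Longrightarrow> le z (mt x y)"
  unfolding le_def
proof -
  assume a: "x\<in>C" "y\<in>C" "z\<in>C" "mt z x = z" "mt z y = z"
  have "mt z (mt x y) = mt (mt z x) y" using a mt_assoc[of z x y] by simp
  also have "\<dots> = z" using a by simp
  finally show "mt z (mt x y) = z" .
qed

lemma jn_upper1: "x\<in>C \<Longrightarrow> y\<in>C \<Longrightarrow> le x (jn x y)"
  unfolding le_def by (simp add: absorb2)

lemma jn_upper2: "x\<in>C \<Longrightarrow> y\<in>C \<Longrightarrow> le y (jn x y)"
  unfolding le_def by (metis absorb2 jn_comm)

lemma jn_least: "x\<in>C \<Longrightarrow> y\<in>C \<Longrightarrow> z\<in>C \<Longrightarrow> le x z \<Longrightarrow> le y z \<Longrightarrow> le (jn x y) z"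
proof -
  assume a: "x\<in>C" "y\<in>C" "z\<in>C" "le x z" "le y z"
  have "mt (jn x y) z = mt z (jn x y)" using a mt_comm jn_closed by simp
  also have "\<dots> = jn (mt z x) (mt z y)" using a distr by simp
  also have "\<dots> = jn x y" using a mt_comm unfolding le_def by simp
  finally show ?thesis unfolding le_def .
qed

lemma bot_le: "x\<in>C \<Longrightarrow> le bt x"
  unfolding le_def by (metis absorb2 bt jn_bot jn_comm)

lemma le_top: "x\<in>C \<Longrightarrow> le x tp"
  unfolding le_def by (simp add: mt_top)

lemma le_jn: "x\<in>C \<Longrightarrow> y\<in>C \<Longrightarrow> le x y \<Longrightarrow> jn x y = y"
  unfolding le_def by (metis absorb1 jn_comm mt_comm)

lemma jn_le: "x\<in>C \<Longrightarrow> y\<in>C \<Longrightarrow> jn x y = y \<Longrightarrow> le x y"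
  unfolding le_def by (metis absorb2)

definition filt where
  "filt G \<longleftrightarrow> G \<subseteq> C \<and> G \<noteq> {} \<and> (\<forall>x\<in>G. \<forall>y\<in>C. le x y \<longrightarrow> y \<in> G) \<and>
     (\<forall>x\<in>G. \<forall>y\<in>G. mt x y \<in> G)"

definition ideal where
  "ideal I \<longleftrightarrow> I \<subseteq> C \<and> I \<noteq> {} \<and> (\<forall>x\<in>I. \<forall>y\<in>C. le y x \<longrightarrow> y \<in> I) \<and>
     (\<forall>x\<in>I. \<forall>y\<in>I. jn x y \<in> I)"

lemma prime_ext:
  assumes "filt G0" "ideal I" "G0 \<inter> I = {}"
  shows "\<exists>G. filt G \<and> G0 \<subseteq> G \<and> G \<inter> I = {} \<and>
             (\<forall>x\<in>C. \<forall>y\<in>C. jn x y \<in> G \<longrightarrow> x \<in> G \<or> y \<in> G)"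
proof -
  define A where "A = {G. filt G \<and> G0 \<subseteq> G \<and> G \<inter> I = {}}"
  have "\<exists>M\<in>A. \<forall>X\<in>A. M \<subseteq> X \<longrightarrow> X = M"
  proof (rule subset_Zorn_nonempty)
    show "A \<noteq> {}" using assms unfolding A_def by blast
  next
    fix CC assume ne: "CC \<noteq> {}" and ch: "subset.chain A CC"
    have sub: "CC \<subseteq> A" and cmp: "\<forall>X\<in>CC. \<forall>Y\<in>CC. X \<subseteq> Y \<or> Y \<subseteq> X"
      using ch by (auto simp: subset.chain_def)
    have "filt (\<Union>CC)"
      unfolding filt_def
    proof (intro conjI ballI impI)
      show "\<Union>CC \<subseteq> C" using sub by (auto simp: A_def filt_def)
      obtain X where "X \<in> CC" using ne by blast
      then have "X \<noteq> {}" using sub by (auto simp: A_def filt_def)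
      then show "\<Union>CC \<noteq> {}" using \<open>X \<in> CC\<close> by blast
    next
      fix x y assume "x \<in> \<Union>CC" "y \<in> C" "le x y"
      then obtain X where X: "X \<in> CC" "x \<in> X" by blast
      then have "filt X" using sub by (auto simp: A_def)
      then have "y \<in> X" using X \<open>y \<in> C\<close> \<open>le x y\<close> unfolding filt_def by blast
      then show "y \<in> \<Union>CC" using X by blast
    next
      fix x y assume x: "x \<in> \<Union>CC" and y: "y \<in> \<Union>CC"
      then obtain X Y where XY: "X\<in>CC" "Y\<in>CC" "x\<in>X" "y\<in>Y" by blast
      show "mt x y \<in> \<Union>CC"
      proof (cases "X \<subseteq> Y")
        case True
        have "filt Y" using XY sub by (auto simp: A_def)
        then have "mt x y \<in> Y" using XY True unfolding filt_def by blast
        then show ?thesis using XY by blast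
      next
        case False
        then have YX: "Y \<subseteq> X" using cmp XY by blast
        have "filt X" using XY sub by (auto simp: A_def)
        then have "mt x y \<in> X" using XY YX unfolding filt_def by blast
        then show ?thesis using XY by blast
      qed
    qed
    then show "\<Union>CC \<in> A" using sub ne by (auto simp: A_def)
  qed
  then obtain M where MA: "M \<in> A" and max: "\<And>X. X\<in>A \<Longrightarrow> M \<subseteq> X \<Longrightarrow> X = M" by blast
  have fM: "filt M" and G0M: "G0 \<subseteq> M" and MI: "M \<inter> I = {}" using MA by (auto simp: A_def)
  have MC: "M \<subseteq> C" using fM by (simp add: filt_def)
  have ext: "\<exists>g\<in>M. \<exists>i\<in>I. le (mt g a) i" if a: "a \<in> C" "a \<notin> M" for a
  proof (rule ccontr)
    assume nex: "\<not> ?thesis"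
    define Ma where "Ma = {z\<in>C. \<exists>g\<in>M. le (mt g a) z}"
    have MMa: "M \<subseteq> Ma"
    proof
      fix z assume z: "z \<in> M"
      then have "z \<in> C" using MC by blast
      then show "z \<in> Ma" unfolding Ma_def using z a mt_lower1 by blast
    qed
    have aMa: "a \<in> Ma"
    proof -
      obtain g where "g \<in> M" using fM by (auto simp: filt_def)
      then show ?thesis unfolding Ma_def using a MC mt_lower2 by blast
    qed
    have "filt Ma"
      unfolding filt_def
    proof (intro conjI ballI impI)
      show "Ma \<subseteq> C" by (auto simp: Ma_def)
      show "Ma \<noteq> {}" using aMa by blast
    next
      fix x y assume x: "x \<in> Ma" and y: "y \<in> C" and "le x y"
      then obtain g where "g\<in>M" "le (mt g a) x" "x \<in> C" by (auto simp: Ma_def)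
      then have "le (mt g a) y"
        using le_trans[of "mt g a" x y] mt_closed[of g a] y a MC \<open>le x y\<close> by blast
      then show "y \<in> Ma" unfolding Ma_def using y \<open>g\<in>M\<close> by blast
    next
      fix x y assume x: "x \<in> Ma" and y: "y \<in> Ma"
      then obtain g h where gh: "g\<in>M" "h\<in>M" "le (mt g a) x" "le (mt h a) y" "x\<in>C" "y\<in>C"
        by (auto simp: Ma_def)
      have gC: "g\<in>C" "h\<in>C" using gh MC by auto
      have ghM: "mt g h \<in> M" using gh fM by (auto simp: filt_def)
      have ghC: "mt g h \<in> C" using gC mt_closed by blast
      have ghaC: "mt (mt g h) a \<in> C" using ghC a mt_closed by blast
      have q1: "le (mt (mt g h) a) (mt g h)" using mt_lower1 ghC a by blast
      have q2: "le (mt (mt g h) a) a" using mt_lower2 ghC a by blast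
      have "le (mt (mt g h) a) g" using le_trans[OF ghaC ghC _ q1 mt_lower1] gC by blast
      then have l1: "le (mt (mt g h) a) (mt g a)" using mt_greatest gC a ghaC q2 by blast
      have "le (mt (mt g h) a) h" using le_trans[OF ghaC ghC _ q1 mt_lower2] gC by blast
      then have l2: "le (mt (mt g h) a) (mt h a)" using mt_greatest gC a ghaC q2 by blast
      have "le (mt (mt g h) a) (mt x y)"
        apply (rule mt_greatest)
        using gh l1 l2 gC a ghC mt_closed le_trans by meson+
      then show "mt x y \<in> Ma" unfolding Ma_def using ghM gh mt_closed by blast
    qed
    moreover have "Ma \<inter> I = {}"
    proof (rule ccontr)
      assume "Ma \<inter> I \<noteq> {}"
      then obtain i where "i \<in> Ma" "i \<in> I" by blast
      then show False using nex unfolding Ma_def by blast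
    qed
    ultimately have "Ma \<in> A" using G0M MMa by (auto simp: A_def)
    then have "Ma = M" using max MMa by blast
    then show False using aMa a by blast
  qed
  have "\<forall>x\<in>C. \<forall>y\<in>C. jn x y \<in> M \<longrightarrow> x \<in> M \<or> y \<in> M"
  proof (intro ballI impI, rule ccontr)
    fix x y assume x: "x\<in>C" and y: "y\<in>C" and j: "jn x y \<in> M" and nn: "\<not> (x \<in> M \<or> y \<in> M)"
    obtain g1 i1 where g1: "g1\<in>M" "i1\<in>I" "le (mt g1 x) i1" using ext x nn by blast
    obtain g2 i2 where g2: "g2\<in>M" "i2\<in>I" "le (mt g2 y) i2" using ext y nn by blast
    have IC: "I \<subseteq> C" using assms(2) by (simp add: ideal_def)
    have c: "g1\<in>C" "g2\<in>C" "i1\<in>C" "i2\<in>C" using g1 g2 MC IC by auto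
    define g where "g = mt (mt g1 g2) (jn x y)"
    have gM: "g \<in> M" unfolding g_def using g1 g2 j fM by (auto simp: filt_def)
    have g12C: "mt g1 g2 \<in> C" "jn x y \<in> C" using c x y mt_closed jn_closed by auto
    have gC: "g \<in> C" unfolding g_def using g12C mt_closed by blast
    have "mt g (jn x y) = mt (mt g1 g2) (mt (jn x y) (jn x y))"
      unfolding g_def using mt_assoc g12C by blast
    also have "\<dots> = g" unfolding g_def using mt_idem g12C by simp
    finally have geq: "g = jn (mt g x) (mt g y)" using distr gC x y by simp
    have lx: "le (mt g x) i1"
    proof -
      have "le g (mt g1 g2)" unfolding g_def using g12C mt_lower1 by blast
      then have "le g g1" using mt_lower1 c gC g12C le_trans by metis
      then have "le (mt g x) (mt g1 x)"
        using mt_greatest[of g1 x "mt g x"] gC x c mt_closed le_trans mt_lower1 mt_lower2 by metis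
      then show ?thesis using g1 c gC x mt_closed le_trans by meson
    qed
    have ly: "le (mt g y) i2"
    proof -
      have "le g (mt g1 g2)" unfolding g_def using g12C mt_lower1 by blast
      then have "le g g2" using mt_lower2 c gC g12C le_trans by metis
      then have "le (mt g y) (mt g2 y)"
        using mt_greatest[of g2 y "mt g y"] gC y c mt_closed le_trans mt_lower1 mt_lower2 by metis
      then show ?thesis using g2 c gC y mt_closed le_trans by meson
    qed
    have "le g (jn i1 i2)"
    proof -
      have "le (jn (mt g x) (mt g y)) (jn i1 i2)"
        apply (rule jn_least)
        using gC x y c mt_closed jn_closed lx ly le_trans jn_upper1 jn_upper2 by meson+
      then show ?thesis using geq by simp
    qed
    moreover have "jn i1 i2 \<in> I" using assms(2) g1 g2 by (simp add: ideal_def)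
    ultimately have "g \<in> I" using assms(2) gC by (auto simp: ideal_def)
    then show False using gM MI by blast
  qed
  then show ?thesis using fM G0M MI by blast
qed

end

lemma bdl_dlat: "bdl_sort L n \<Longrightarrow> dlat (car L n) (join L n) (meet L n) (bot L n) (top L n)"
  unfolding bdl_sort_def by unfold_locales auto

lemma le_leq: "bdl_sort L n \<Longrightarrow> dlat.le (meet L n) = leq L n"
  by (simp add: fun_eq_iff leq_def dlat.le_def[OF bdl_dlat])

theorem lemma4p11:
  fixes L :: "'a pe_alg" and n :: nat and F :: "'a set" and r :: 'a
  assumes "pe_algebra L"
    and "prime_filter L n F"
    and "r \<in> car L (Suc n)"
    and "ex L n r \<in> F"
  shows "\<exists>G. prime_filter L (Suc n) G \<and> r \<in> G \<and>
             (\<forall>u\<in>car L n. cyl L n u \<in> G \<longleftrightarrow> u \<in> F)"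
proof -
  have bd: "\<And>k. bdl_sort L k" using assms(1) by (simp add: pe_algebra_def)
  have sa: "subst_ax L" and ea: "ex_ax L" using assms(1) by (simp_all add: pe_algebra_def)
  interpret D0: dlat "car L n" "join L n" "meet L n" "bot L n" "top L n" by (rule bdl_dlat[OF bd])
  interpret D1: dlat "car L (Suc n)" "join L (Suc n)" "meet L (Suc n)" "bot L (Suc n)" "top L (Suc n)"
    by (rule bdl_dlat[OF bd])
  have L0: "leq L n = D0.le" using le_leq[OF bd] by simp
  have L1: "leq L (Suc n) = D1.le" using le_leq[OF bd] by simp
  have alpha: "restrict (\<lambda>i. i) {1..n} \<in> {1..n} \<rightarrow>\<^sub>E {1..Suc n}" by auto
  have c_car: "\<And>u. u \<in> car L n \<Longrightarrow> cyl L n u \<in> car L (Suc n)"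
    using sa alpha unfolding subst_ax_def cyl_def by blast
  have c_mt: "\<And>u v. u \<in> car L n \<Longrightarrow> v \<in> car L n \<Longrightarrow>
      cyl L n (meet L n u v) = meet L (Suc n) (cyl L n u) (cyl L n v)"
    using sa alpha unfolding subst_ax_def cyl_def by blast
  have c_jn: "\<And>u v. u \<in> car L n \<Longrightarrow> v \<in> car L n \<Longrightarrow>
      cyl L n (join L n u v) = join L (Suc n) (cyl L n u) (cyl L n v)"
    using sa alpha unfolding subst_ax_def cyl_def by blast
  have c_bot: "cyl L n (bot L n) = bot L (Suc n)"
    using sa alpha unfolding subst_ax_def cyl_def by blast
  have ex_car: "\<And>x. x \<in> car L (Suc n) \<Longrightarrow> ex L n x \<in> car L n"
    using ea unfolding ex_ax_def by blast
  have ex_jn: "\<And>x y. x \<in> car L (Suc n) \<Longrightarrow> y \<in> car L (Suc n) \<Longrightarrow>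
      ex L n (join L (Suc n) x y) = join L n (ex L n x) (ex L n y)"
    using ea unfolding ex_ax_def by blast
  have ex_mt: "\<And>x u. x \<in> car L (Suc n) \<Longrightarrow> u \<in> car L n \<Longrightarrow>
      ex L n (meet L (Suc n) x (cyl L n u)) = meet L n (ex L n x) u"
    using ea unfolding ex_ax_def by blast
  have c_mono: "\<And>u v. u \<in> car L n \<Longrightarrow> v \<in> car L n \<Longrightarrow> D0.le u v \<Longrightarrow>
      D1.le (cyl L n u) (cyl L n v)"
    unfolding D0.le_def D1.le_def using c_mt by metis
  have ex_mono: "\<And>x y. x \<in> car L (Suc n) \<Longrightarrow> y \<in> car L (Suc n) \<Longrightarrow> D1.le x y \<Longrightarrow>
      D0.le (ex L n x) (ex L n y)"
  proof -
    fix x y assume a: "x \<in> car L (Suc n)" "y \<in> car L (Suc n)" "D1.le x y"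
    have "join L (Suc n) x y = y" using D1.le_jn a by blast
    then have "join L n (ex L n x) (ex L n y) = ex L n y" using ex_jn a by metis
    then show "D0.le (ex L n x) (ex L n y)" using D0.jn_le ex_car a by blast
  qed
  have ex_c: "\<And>u. u \<in> car L n \<Longrightarrow> D0.le (ex L n (cyl L n u)) u"
  proof -
    fix u assume u: "u \<in> car L n"
    have "cyl L n u = meet L (Suc n) (top L (Suc n)) (cyl L n u)"
      using D1.mt_comm D1.mt_top D1.tp c_car u by metis
    then have "ex L n (cyl L n u) = meet L n (ex L n (top L (Suc n))) u"
      using ex_mt D1.tp u by metis
    then show "D0.le (ex L n (cyl L n u)) u" using D0.mt_lower2 ex_car D1.tp u by metis
  qed
  have PF: "F \<subseteq> car L n" "F \<noteq> car L n" "F \<noteq> {}"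
    "\<forall>x\<in>F. \<forall>y\<in>car L n. D0.le x y \<longrightarrow> y \<in> F"
    "\<forall>x\<in>F. \<forall>y\<in>F. meet L n x y \<in> F"
    "\<forall>x\<in>car L n. \<forall>y\<in>car L n. join L n x y \<in> F \<longrightarrow> x \<in> F \<or> y \<in> F"
    using assms(2) unfolding prime_filter_def L0 by auto
  have topF: "top L n \<in> F"
  proof -
    obtain x where "x \<in> F" using PF(3) by blast
    then show ?thesis using PF(1,4) D0.le_top D0.tp by blast
  qed
  have botF: "bot L n \<notin> F"
  proof
    assume "bot L n \<in> F"
    then have "car L n \<subseteq> F" using PF(4) D0.bot_le by blast
    then show False using PF(1,2) by blast
  qed
  define G0 where "G0 = {x \<in> car L (Suc n). \<exists>f\<in>F. D1.le (meet L (Suc n) r (cyl L n f)) x}"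
  define I where "I = {x \<in> car L (Suc n). \<exists>u\<in>car L n - F. D1.le x (cyl L n u)}"
  have r: "r \<in> car L (Suc n)" by (rule assms(3))
  have rG0: "r \<in> G0"
    unfolding G0_def using r topF D1.mt_lower1 c_car D0.tp by blast
  have fG0: "D1.filt G0"
    unfolding D1.filt_def
  proof (intro conjI ballI impI)
    show "G0 \<subseteq> car L (Suc n)" by (auto simp: G0_def)
    show "G0 \<noteq> {}" using rG0 by blast
  next
    fix x y assume x: "x \<in> G0" and y: "y \<in> car L (Suc n)" and "D1.le x y"
    then obtain f where "f \<in> F" "D1.le (meet L (Suc n) r (cyl L n f)) x" "x \<in> car L (Suc n)"
      by (auto simp: G0_def)
    moreover have "meet L (Suc n) r (cyl L n f) \<in> car L (Suc n)"
      using D1.mt_closed r c_car PF(1) \<open>f \<in> F\<close> by blast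
    ultimately show "y \<in> G0" unfolding G0_def using y \<open>D1.le x y\<close> D1.le_trans by blast
  next
    fix x y assume x: "x \<in> G0" and y: "y \<in> G0"
    then obtain f g where fg: "f \<in> F" "g \<in> F" "D1.le (meet L (Suc n) r (cyl L n f)) x"
      "D1.le (meet L (Suc n) r (cyl L n g)) y" "x \<in> car L (Suc n)" "y \<in> car L (Suc n)"
      by (auto simp: G0_def)
    have fgC: "f \<in> car L n" "g \<in> car L n" using fg PF(1) by auto
    have hF: "meet L n f g \<in> F" using PF(5) fg by blast
    have hC: "meet L n f g \<in> car L n" using D0.mt_closed fgC by blast
    define z where "z = meet L (Suc n) r (cyl L n (meet L n f g))"
    have zC: "z \<in> car L (Suc n)" unfolding z_def using D1.mt_closed r c_car hC by blast
    have z1: "D1.le z r" unfolding z_def using D1.mt_lower1 r c_car hC by blast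
    have z2: "D1.le z (cyl L n (meet L n f g))" unfolding z_def using D1.mt_lower2 r c_car hC by blast
    have zf: "D1.le z (cyl L n f)"
      using D1.le_trans[OF zC c_car[OF hC] c_car[OF fgC(1)] z2 c_mono[OF hC fgC(1) D0.mt_lower1[OF fgC]]] .
    have zg: "D1.le z (cyl L n g)"
      using D1.le_trans[OF zC c_car[OF hC] c_car[OF fgC(2)] z2 c_mono[OF hC fgC(2) D0.mt_lower2[OF fgC]]] .
    have "D1.le z (meet L (Suc n) r (cyl L n f))"
      using D1.mt_greatest r c_car fgC zC z1 zf by blast
    then have zx: "D1.le z x"
      using D1.le_trans zC fg D1.mt_closed r c_car fgC by meson
    have "D1.le z (meet L (Suc n) r (cyl L n g))"
      using D1.mt_greatest r c_car fgC zC z1 zg by blast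
    then have zy: "D1.le z y"
      using D1.le_trans zC fg D1.mt_closed r c_car fgC by meson
    have "D1.le z (meet L (Suc n) x y)" using D1.mt_greatest fg zC zx zy by blast
    then show "meet L (Suc n) x y \<in> G0"
      unfolding G0_def using hF z_def D1.mt_closed fg by blast
  qed
  have notF_jn: "\<And>u v. u \<in> car L n - F \<Longrightarrow> v \<in> car L n - F \<Longrightarrow> join L n u v \<in> car L n - F"
    using PF(6) D0.jn_closed by blast
  have iI: "D1.ideal I"
    unfolding D1.ideal_def
  proof (intro conjI ballI impI)
    show "I \<subseteq> car L (Suc n)" by (auto simp: I_def)
    have b0: "bot L n \<in> car L n - F" using botF D0.bt by blast
    have "D1.le (bot L (Suc n)) (cyl L n (bot L n))" using c_bot D1.le_refl D1.bt by simp
    then have "bot L (Suc n) \<in> I" unfolding I_def using b0 D1.bt by blast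
    then show "I \<noteq> {}" by blast
  next
    fix x y assume x: "x \<in> I" and y: "y \<in> car L (Suc n)" and "D1.le y x"
    then obtain u where "u \<in> car L n - F" "D1.le x (cyl L n u)" "x \<in> car L (Suc n)"
      by (auto simp: I_def)
    then show "y \<in> I" unfolding I_def using y \<open>D1.le y x\<close> D1.le_trans c_car by blast
  next
    fix x y assume x: "x \<in> I" and y: "y \<in> I"
    then obtain u v where uv: "u \<in> car L n - F" "v \<in> car L n - F" "D1.le x (cyl L n u)"
      "D1.le y (cyl L n v)" "x \<in> car L (Suc n)" "y \<in> car L (Suc n)"
      by (auto simp: I_def)
    have uC: "u \<in> car L n" "v \<in> car L n" using uv by auto
    have cu: "cyl L n u \<in> car L (Suc n)" "cyl L n v \<in> car L (Suc n)" using c_car uC by auto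
    have "D1.le (join L (Suc n) x y) (join L (Suc n) (cyl L n u) (cyl L n v))"
      apply (rule D1.jn_least)
      using uv cu D1.jn_closed D1.le_trans D1.jn_upper1 D1.jn_upper2 by meson+
    then have "D1.le (join L (Suc n) x y) (cyl L n (join L n u v))" using c_jn uC by simp
    then show "join L (Suc n) x y \<in> I"
      unfolding I_def using notF_jn uv D1.jn_closed by blast
  qed
  have disj: "G0 \<inter> I = {}"
  proof (rule ccontr)
    assume "G0 \<inter> I \<noteq> {}"
    then obtain x f u where x: "x \<in> car L (Suc n)" "f \<in> F" "D1.le (meet L (Suc n) r (cyl L n f)) x"
      "u \<in> car L n - F" "D1.le x (cyl L n u)"
      unfolding G0_def I_def by blast
    have fC: "f \<in> car L n" using x PF(1) by blast
    have uC: "u \<in> car L n" using x by blast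
    have mC: "meet L (Suc n) r (cyl L n f) \<in> car L (Suc n)" using D1.mt_closed r c_car fC by blast
    have "D1.le (meet L (Suc n) r (cyl L n f)) (cyl L n u)" using D1.le_trans mC x c_car uC by blast
    then have "D0.le (ex L n (meet L (Suc n) r (cyl L n f))) (ex L n (cyl L n u))"
      using ex_mono mC c_car uC by blast
    then have "D0.le (meet L n (ex L n r) f) (ex L n (cyl L n u))" using ex_mt r fC by simp
    then have "D0.le (meet L n (ex L n r) f) u"
      using D0.le_trans ex_c uC ex_car c_car D0.mt_closed r fC by meson
    moreover have "meet L n (ex L n r) f \<in> F" using PF(5) assms(4) x by blast
    ultimately have "u \<in> F" using PF(4) uC by blast
    then show False using x by blast
  qed
  obtain G where G: "D1.filt G" "G0 \<subseteq> G" "G \<inter> I = {}"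
    "\<forall>x\<in>car L (Suc n). \<forall>y\<in>car L (Suc n). join L (Suc n) x y \<in> G \<longrightarrow> x \<in> G \<or> y \<in> G"
    using D1.prime_ext[OF fG0 iI disj] by blast
  have "prime_filter L (Suc n) G"
  proof -
    have "I \<noteq> {}" "I \<subseteq> car L (Suc n)" using iI by (auto simp: D1.ideal_def)
    then have "G \<noteq> car L (Suc n)" using G(3) by blast
    then show ?thesis using G(1,4) unfolding prime_filter_def L1 D1.filt_def by blast
  qed
  moreover have "r \<in> G" using rG0 G(2) by blast
  moreover have "\<forall>u\<in>car L n. cyl L n u \<in> G \<longleftrightarrow> u \<in> F"
  proof
    fix u assume u: "u \<in> car L n"
    show "cyl L n u \<in> G \<longleftrightarrow> u \<in> F"
    proof
      assume "cyl L n u \<in> G"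
      moreover have "u \<notin> F \<Longrightarrow> cyl L n u \<in> I"
        unfolding I_def using u c_car D1.le_refl by blast
      ultimately show "u \<in> F" using G(3) by blast
    next
      assume "u \<in> F"
      then have "cyl L n u \<in> G0" unfolding G0_def using D1.mt_lower2 r c_car u by blast
      then show "cyl L n u \<in> G" using G(2) by blast
    qed
  qed
  ultimately show ?thesis by blast
qed

end
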